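(* Let $\lambda>0$ and $\alpha_1,\dots,\alpha_n,\alpha^*_1,\dots,\alpha^*_n>0$. Let $X_1,\dots,X_n$ be mutually independent with $X_i\sim\mathrm{GE}(\alpha_i,\lambda)$ and $X^*_1,\dots,X^*_n$ mutually independent with $X^*_i\sim\mathrm{GE}(\alpha^*_i,\lambda)$. If $\sum_{i=1}^{j}\alpha^*_{(i)}\ge\sum_{i=1}^{j}\alpha_{(i)}$ for all $j=1,\dots,n$, then $X_{1:n}\le_{\rm hr}X^*_{1:n}$.
   Context: $X\sim\mathrm{GE}(\alpha,\lambda)$ (generalized exponential) means $X$ has distribution function $(1-e^{-\lambda x})^{\alpha}$, $x>0$. $X_{1:n}=\min_i X_i$. $\alpha_{(1)}\le\dots\le\alpha_{(n)}$ are the components in increasing order. $X\le_{\rm hr}Y$ means the hazard rate of $X$ is pointwise $\ge$ that of $Y$. *)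

theory Defs
  imports "HOL-Probability.Probability"
begin

definition GE_cdf :: "real \<Rightarrow> real \<Rightarrow> real \<Rightarrow> real" where
  "GE_cdf a l x = (if x > 0 then (1 - exp (- l * x)) powr a else 0)"

definition survival :: "'a measure \<Rightarrow> ('a \<Rightarrow> real) \<Rightarrow> real \<Rightarrow> real" where
  "survival M Y x = measure M {\<omega> \<in> space M. Y \<omega> > x}"

definition hazard_rate :: "'a measure \<Rightarrow> ('a \<Rightarrow> real) \<Rightarrow> real \<Rightarrow> real" where
  "hazard_rate M Y x = - deriv (survival M Y) x / survival M Y x"

text \<open>Hazard rate order X <=_hr Y (X on M, Y on N), for nonnegative lifetimes:
  the hazard rate of X is pointwise at least that of Y on the support (0, infinity).\<close>
definition hr_le :: "'a measure \<Rightarrow> ('a \<Rightarrow> real) \<Rightarrow> 'b measure \<Rightarrow> ('b \<Rightarrow> real) \<Rightarrow> bool" where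
  "hr_le M X N Y \<longleftrightarrow> (\<forall>x > 0. hazard_rate M X x \<ge> hazard_rate N Y x)"

definition ord_stat :: "(nat \<Rightarrow> real) \<Rightarrow> nat \<Rightarrow> nat \<Rightarrow> real" where
  "ord_stat a n i = sort (map a [1..<Suc n]) ! (i - 1)"

end

theory Submission
  imports Defs
begin


definition phi :: "real \<Rightarrow> real" where "phi s = s / (exp s - 1)"
definition dphi :: "real \<Rightarrow> real" where "dphi s = (exp s - 1 - s * exp s) / (exp s - 1)^2"

lemma phi_deriv: assumes "s > 0" shows "(phi has_real_derivative dphi s) (at s)"
proof -
  have ne: "exp s - 1 \<noteq> 0" using assms by simp
  show ?thesis unfolding phi_def[abs_def] dphi_def
    apply (rule derivative_eq_intros refl | simp add: ne)+
    using assms ne by (simp_all add: power2_eq_square)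
qed

lemma alg2: fixes E x :: real assumes "E - 1 \<noteq> 0"
  shows "((E * 1 - 0 - (1 * E + E * 1 * x)) * (E - 1)\<^sup>2 - (E - 1 - x * E) * (real 2 * ((E * 1 - 0) * (E - 1) ^ (2 - Suc 0)))) / ((E - 1)\<^sup>2 * (E - 1)\<^sup>2) = E * (x * (E + 1) - 2 * (E - 1)) / (E - 1) ^ 3"
proof -
  have "((E * 1 - 0 - (1 * E + E * 1 * x)) * (E - 1)\<^sup>2 - (E - 1 - x * E) * (real 2 * ((E * 1 - 0) * (E - 1) ^ (2 - Suc 0))))
     = (E - 1) * (E * (x * (E + 1) - 2 * (E - 1)))"
    by (simp add: power2_eq_square algebra_simps)
  moreover have "(E - 1)\<^sup>2 * (E - 1)\<^sup>2 = (E - 1) * (E - 1)^3" by (simp add: power2_eq_square power3_eq_cube)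
  ultimately show ?thesis using assms by simp
qed

lemma dphi_nonpos: assumes "s > 0" shows "dphi s \<le> 0"
proof -
  have "1 - s \<le> exp (-s)" using exp_ge_add_one_self[of "-s"] by simp
  then have "exp s * (1 - s) \<le> exp s * exp (-s)" by (intro mult_left_mono) auto
  then have "exp s - 1 - s * exp s \<le> 0" by (simp add: exp_minus algebra_simps)
  then show ?thesis unfolding dphi_def by (intro divide_nonpos_nonneg) auto
qed

lemma k1_nonneg: fixes s :: real assumes "s \<ge> 0" shows "1 - exp s + s * exp s \<ge> 0"
proof -
  have "(\<lambda>s. 1 - exp s + s * exp s) 0 \<le> (\<lambda>s. 1 - exp s + s * exp s) s"
  proof (rule DERIV_nonneg_imp_nondecreasing[of 0 s])
    show "0 \<le> s" using assms .
  next
    fix x :: real assume "0 \<le> x"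
    show "\<exists>y. ((\<lambda>s. 1 - exp s + s * exp s) has_real_derivative y) (at x) \<and> y \<ge> 0"
      apply (rule exI[of _ "x * exp x"])
      apply (intro conjI)
      apply (rule derivative_eq_intros refl | simp)+
      using \<open>0 \<le> x\<close> by simp
  qed
  then show ?thesis by simp
qed

lemma k_nonneg: fixes s :: real assumes "s \<ge> 0" shows "s * (exp s + 1) - 2 * (exp s - 1) \<ge> 0"
proof -
  have "(\<lambda>s. s * (exp s + 1) - 2 * (exp s - 1)) 0 \<le> (\<lambda>s. s * (exp s + 1) - 2 * (exp s - 1)) s"
  proof (rule DERIV_nonneg_imp_nondecreasing[of 0 s])
    show "0 \<le> s" using assms .
  next
    fix x :: real assume "0 \<le> x"
    show "\<exists>y. ((\<lambda>s. s * (exp s + 1) - 2 * (exp s - 1)) has_real_derivative y) (at x) \<and> y \<ge> 0"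
      apply (rule exI[of _ "1 - exp x + x * exp x"])
      apply (intro conjI)
      apply (rule derivative_eq_intros refl | simp)+
      apply (simp add: algebra_simps)
      using k1_nonneg[OF \<open>0 \<le> x\<close>] by simp
  qed
  then show ?thesis by simp
qed

lemma dphi_mono: assumes "0 < a" "a \<le> b" shows "dphi a \<le> dphi b"
proof (rule DERIV_nonneg_imp_nondecreasing[OF assms(2)])
  fix x assume x: "a \<le> x" "x \<le> b"
  then have xp: "x > 0" using assms by simp
  have ne: "exp x - 1 \<noteq> 0" using xp by simp
  have pos: "exp x - 1 > 0" using xp by simp
  show "\<exists>y. (dphi has_real_derivative y) (at x) \<and> y \<ge> 0"
  proof (intro exI conjI)
    show "(dphi has_real_derivative (exp x * (x * (exp x + 1) - 2 * (exp x - 1)) / (exp x - 1)^3)) (at x)"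
      unfolding dphi_def[abs_def]
      apply (rule derivative_eq_intros refl | simp add: ne)+
      using xp apply simp
      using ne by (rule alg2)
    show "exp x * (x * (exp x + 1) - 2 * (exp x - 1)) / (exp x - 1)^3 \<ge> 0"
      using k_nonneg[of x] xp pos by simp
  qed
qed




lemma abel:
  fixes d e :: "nat \<Rightarrow> real"
  assumes "\<And>i j. i \<le> j \<Longrightarrow> j < m \<Longrightarrow> d i \<le> d j"
    and "\<And>j. j \<le> m \<Longrightarrow> 0 \<le> (\<Sum>i<j. e i)"
    and "\<And>i. i < m \<Longrightarrow> d i \<le> D"
  shows "(\<Sum>i<m. d i * e i) \<le> D * (\<Sum>i<m. e i)"
  using assms
proof (induction m arbitrary: D)
  case 0
  then show ?case by simp
next
  case (Suc m)
  have IH: "(\<Sum>i<m. d i * e i) \<le> d m * (\<Sum>i<m. e i)"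
    using Suc.prems by (intro Suc.IH) auto
  have "(\<Sum>i<Suc m. d i * e i) = (\<Sum>i<m. d i * e i) + d m * e m" by simp
  also have "\<dots> \<le> d m * (\<Sum>i<m. e i) + d m * e m" using IH by simp
  also have "\<dots> = d m * (\<Sum>i<Suc m. e i)" by (simp add: algebra_simps)
  also have "\<dots> \<le> D * (\<Sum>i<Suc m. e i)"
    using Suc.prems(2)[of "Suc m"] Suc.prems(3)[of m] by (intro mult_right_mono) auto
  finally show ?case .
qed

lemma tangent:
  fixes f f' :: "real \<Rightarrow> real"
  assumes der: "\<And>x. x > 0 \<Longrightarrow> (f has_real_derivative f' x) (at x)"
    and mono: "\<And>x y. 0 < x \<Longrightarrow> x \<le> y \<Longrightarrow> f' x \<le> f' y"
    and "a > 0" "b > 0"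
  shows "f b - f a \<le> f' b * (b - a)"
proof (cases a b rule: linorder_cases)
  case less
  obtain z where z: "a < z" "z < b" "f b - f a = (b - a) * f' z"
    using MVT2[OF less, of f f'] der \<open>a > 0\<close> by force
  have "f' z \<le> f' b" using mono[of z b] z \<open>a > 0\<close> by simp
  then show ?thesis using z less by (simp add: mult.commute mult_right_mono)
next
  case equal then show ?thesis by simp
next
  case greater
  obtain z where z: "b < z" "z < a" "f a - f b = (a - b) * f' z"
    using MVT2[OF greater, of f f'] der \<open>b > 0\<close> by force
  have "f' b \<le> f' z" using mono[of b z] z \<open>b > 0\<close> by simp
  then have "f' b * (a - b) \<le> f' z * (a - b)" using greater by (intro mult_right_mono) auto
  then show ?thesis using z by (simp add: algebra_simps)
qed

lemma majorization:
  fixes f f' :: "real \<Rightarrow> real" and a b :: "nat \<Rightarrow> real"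
  assumes der: "\<And>x. x > 0 \<Longrightarrow> (f has_real_derivative f' x) (at x)"
    and mono: "\<And>x y. 0 < x \<Longrightarrow> x \<le> y \<Longrightarrow> f' x \<le> f' y"
    and nonpos: "\<And>x. x > 0 \<Longrightarrow> f' x \<le> 0"
    and apos: "\<And>i. i < n \<Longrightarrow> a i > 0" and bpos: "\<And>i. i < n \<Longrightarrow> b i > 0"
    and bmono: "\<And>i j. i \<le> j \<Longrightarrow> j < n \<Longrightarrow> b i \<le> b j"
    and part: "\<And>j. j \<le> n \<Longrightarrow> (\<Sum>i<j. a i) \<le> (\<Sum>i<j. b i)"
  shows "(\<Sum>i<n. f (b i)) \<le> (\<Sum>i<n. f (a i))"
proof -
  have "(\<Sum>i<n. f (b i)) - (\<Sum>i<n. f (a i)) = (\<Sum>i<n. f (b i) - f (a i))"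
    by (simp add: sum_subtractf)
  also have "\<dots> \<le> (\<Sum>i<n. f' (b i) * (b i - a i))"
    by (intro sum_mono tangent[OF der mono]) (auto intro: apos bpos)
  also have "\<dots> \<le> 0 * (\<Sum>i<n. (b i - a i))"
  proof (rule abel)
    show "f' (b i) \<le> f' (b j)" if "i \<le> j" "j < n" for i j
      using mono[of "b i" "b j"] bmono[OF that] bpos[of i] that by simp
    show "0 \<le> (\<Sum>i<j. b i - a i)" if "j \<le> n" for j
      using part[OF that] by (simp add: sum_subtractf)
    show "f' (b i) \<le> 0" if "i < n" for i using nonpos bpos that by simp
  qed
  finally show ?thesis by simp
qed

lemma shift_sum: fixes j :: nat shows "(\<Sum>i=1..j. h (i - 1)) = (\<Sum>i<j. (h i :: real))"
  by (induction j) (auto simp: atLeastAtMostSuc_conv)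

lemma sum_list_nth: "sum_list (map g xs) = (\<Sum>i<length xs. g (xs ! i))"
  by (simp add: sum_list_sum_nth atLeast0LessThan)

lemma ord_stat_sum:
  fixes g :: "real \<Rightarrow> real"
  shows "(\<Sum>i=1..n. g (ord_stat a n i)) = (\<Sum>i=1..n. g (a i))"
proof -
  let ?xs = "map a [1..<Suc n]"
  have "(\<Sum>i=1..n. g (ord_stat a n i)) = (\<Sum>i<n. g (sort ?xs ! i))"
    unfolding ord_stat_def by (rule shift_sum)
  also have "\<dots> = sum_list (map g (sort ?xs))"
    using sum_list_nth[of g "sort ?xs"] by (simp del: upt_Suc)
  also have "\<dots> = sum_list (map g ?xs)"
    by (metis mset_map mset_sort sum_mset_sum_list)
  also have "\<dots> = (\<Sum>i=1..n. g (a i))"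
    by (simp del: upt_Suc add: sum_list_distinct_conv_sum_set atLeastLessThanSuc_atLeastAtMost)
  finally show ?thesis .
qed




lemma surv_min:
  fixes X :: "nat \<Rightarrow> 'a \<Rightarrow> real"
  assumes "prob_space M" "n \<ge> 1" "prob_space.indep_vars M (\<lambda>_. borel) X {1..n}"
    "\<forall>i\<in>{1..n}. \<forall>x. measure M {\<omega>\<in>space M. X i \<omega> \<le> x} = F i x"
  shows "survival M (\<lambda>\<omega>. Min ((\<lambda>i. X i \<omega>) ` {1..n})) x = (\<Prod>i\<in>{1..n}. 1 - F i x)"
proof -
  interpret prob_space M by fact
  have rv: "\<And>i. i \<in> {1..n} \<Longrightarrow> X i \<in> borel_measurable M"
    and ind: "indep_sets (\<lambda>i. sigma_sets (space M) {X i -` A \<inter> space M | A. A \<in> sets borel}) {1..n}"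
    using assms(3) unfolding indep_vars_def by auto
  define A where "A i = X i -` {x<..} \<inter> space M" for i
  have "{\<omega> \<in> space M. x < Min ((\<lambda>i. X i \<omega>) ` {1..n})} = (\<Inter>i\<in>{1..n}. A i)"
    using assms(2) by (auto simp: A_def)
  then have "survival M (\<lambda>\<omega>. Min ((\<lambda>i. X i \<omega>) ` {1..n})) x = prob (\<Inter>i\<in>{1..n}. A i)"
    unfolding survival_def by simp
  also have "\<dots> = (\<Prod>i\<in>{1..n}. prob (A i))"
  proof (rule indep_setsD[OF ind])
    show "{1..n} \<noteq> {}" using assms(2) by simp
    show "\<forall>j\<in>{1..n}. A j \<in> sigma_sets (space M) {X j -` A \<inter> space M |A. A \<in> sets borel}"
      unfolding A_def by (auto intro!: sigma_sets.Basic exI[of _ "{x<..}"])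
  qed auto
  also have "\<dots> = (\<Prod>i\<in>{1..n}. 1 - F i x)"
  proof (rule prod.cong[OF refl])
    fix i assume i: "i \<in> {1..n}"
    have ev: "{\<omega>\<in>space M. X i \<omega> \<le> x} \<in> events" using rv[OF i] by measurable
    have "A i = space M - {\<omega>\<in>space M. X i \<omega> \<le> x}" by (auto simp: A_def)
    then have "prob (A i) = 1 - prob {\<omega>\<in>space M. X i \<omega> \<le> x}" using prob_compl[OF ev] by simp
    then show "prob (A i) = 1 - F i x" using assms(4) i by simp
  qed
  finally show ?thesis .
qed




lemma comp_deriv:
  fixes lam a y :: real
  assumes "lam > 0" "y > 0"
  shows "((\<lambda>y. 1 - (1 - exp (-lam*y)) powr a) has_real_derivative
           -(a * (1 - exp (-lam*y)) powr (a - 1) * (lam * exp (-lam*y)))) (at y)"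
proof -
  have pos: "0 < 1 - exp (-lam*y)" using assms by simp
  show ?thesis
    by (rule derivative_eq_intros refl | use pos in simp)+
qed

lemma term_eq:
  fixes a u L :: real
  assumes "0 < u" "u < 1" "a > 0"
  shows "-(-(a * u powr (a - 1) * L) / (1 - u powr a)) = L / (u * (- ln u)) * phi (- ln u * a)"
proof -
  define t where "t = - ln u"
  have t: "t > 0" using assms by (simp add: t_def)
  have ua: "u powr a = exp (- t * a)" using assms by (simp add: powr_def t_def)
  have ua1: "u powr (a - 1) = u powr a / u" using assms by (simp add: powr_diff)
  have e: "exp (t * a) > 1" using t assms by simp
  have "exp (- t * a) = 1 / exp (t * a)" by (simp add: exp_minus field_simps)
  then have "-(-(a * u powr (a - 1) * L) / (1 - u powr a)) = a * (1 / exp (t*a) / u) * L / (1 - 1 / exp (t*a))"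
    using ua ua1 by simp
  also have "\<dots> = L / (u * t) * (t * a / (exp (t * a) - 1))"
    using e t assms by (simp add: field_simps)
  finally show ?thesis unfolding phi_def t_def by simp
qed

lemma hazard_min:
  fixes X :: "nat \<Rightarrow> 'a \<Rightarrow> real"
  assumes "prob_space M" "n \<ge> 1" "lam > 0" "\<forall>i\<in>{1..n}. alpha i > 0"
    "prob_space.indep_vars M (\<lambda>_. borel) X {1..n}"
    "\<forall>i\<in>{1..n}. \<forall>x. measure M {\<omega> \<in> space M. X i \<omega> \<le> x} = GE_cdf (alpha i) lam x"
    "x > 0"
  shows "hazard_rate M (\<lambda>\<omega>. Min ((\<lambda>i. X i \<omega>) ` {1..n})) x =
    (\<Sum>i=1..n. (lam * exp (-lam*x) / ((1 - exp (-lam*x)) * (- ln (1 - exp (-lam*x))))) *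
        phi (- ln (1 - exp (-lam*x)) * alpha i))"
proof -
  define u where "u = 1 - exp (-lam*x)"
  have u: "0 < u" "u < 1" using assms by (auto simp: u_def)
  define f where "f i y = 1 - (1 - exp (-lam*y)) powr alpha i" for i y
  define f' where "f' i = -(alpha i * u powr (alpha i - 1) * (lam * exp (-lam*x)))" for i
  define Y where "Y = (\<lambda>\<omega>. Min ((\<lambda>i. X i \<omega>) ` {1..n}))"
  have S: "survival M Y y = (\<Prod>i\<in>{1..n}. f i y)" if "y > 0" for y
    unfolding Y_def
    by (subst surv_min[OF assms(1,2,5,6)]) (use that in \<open>simp add: GE_cdf_def f_def\<close>)
  have fne: "f i x \<noteq> 0" if "i \<in> {1..n}" for i
  proof -
    have "u powr alpha i < 1 powr alpha i"
      using u assms(4) that by (intro powr_less_mono2) auto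
    then show ?thesis by (simp add: f_def u_def)
  qed
  have D0: "((\<lambda>y. \<Prod>i\<in>{1..n}. f i y) has_real_derivative
              (\<Prod>i\<in>{1..n}. f i x) * (\<Sum>i\<in>{1..n}. f' i / f i x)) (at x)"
    using has_field_derivative_prod'[of "{1..n}" f x f'] fne
      comp_deriv[OF assms(3,7)] unfolding f_def f'_def u_def by auto
  have D: "(survival M Y has_real_derivative
              (\<Prod>i\<in>{1..n}. f i x) * (\<Sum>i\<in>{1..n}. f' i / f i x)) (at x)"
    by (rule has_field_derivative_transform_within_open[OF D0, of "{0<..}"])
       (use assms(7) S in auto)
  have Pne: "(\<Prod>i\<in>{1..n}. f i x) \<noteq> 0" using fne by simp
  have "hazard_rate M Y x = - (\<Sum>i\<in>{1..n}. f' i / f i x)"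
    unfolding hazard_rate_def DERIV_imp_deriv[OF D] S[OF assms(7)] using Pne by simp
  also have "\<dots> = (\<Sum>i\<in>{1..n}. - (f' i / f i x))" by (simp add: sum_negf)
  also have "\<dots> = (\<Sum>i=1..n. (lam * exp (-lam*x) / ((1 - exp (-lam*x)) * (- ln (1 - exp (-lam*x))))) *
        phi (- ln (1 - exp (-lam*x)) * alpha i))"
  proof (rule sum.cong[OF refl])
    fix i assume i: "i \<in> {1..n}"
    show "- (f' i / f i x) = (lam * exp (-lam*x) / ((1 - exp (-lam*x)) * (- ln (1 - exp (-lam*x))))) *
        phi (- ln (1 - exp (-lam*x)) * alpha i)"
      using term_eq[OF u, of "alpha i" "lam * exp (-lam*x)"] assms(4) i
      unfolding f'_def f_def u_def by simp
  qed
  finally show ?thesis unfolding Y_def .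
qed




lemma shift_sum2: fixes j :: nat shows "(\<Sum>i<j. g (Suc i)) = (\<Sum>i=1..j. (g i :: real))"
  by (induction j) (auto simp: atLeastAtMostSuc_conv)

lemma ord_stat_facts:
  assumes "\<forall>i\<in>{1..n}. a i > 0"
  shows "\<And>i. i < n \<Longrightarrow> ord_stat a n (Suc i) > 0"
    and "\<And>i j. i \<le> j \<Longrightarrow> j < n \<Longrightarrow> ord_stat a n (Suc i) \<le> ord_stat a n (Suc j)"
proof -
  let ?xs = "map a [1..<Suc n]"
  have len: "length (sort ?xs) = n" by simp
  show "ord_stat a n (Suc i) > 0" if "i < n" for i
  proof -
    have "sort ?xs ! i \<in> set (sort ?xs)" using that len by (intro nth_mem) simp
    then have "sort ?xs ! i \<in> a ` {1..n}" by (simp del: upt_Suc add: atLeastLessThanSuc_atLeastAtMost)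
    then show ?thesis using assms unfolding ord_stat_def by auto
  qed
  show "ord_stat a n (Suc i) \<le> ord_stat a n (Suc j)" if "i \<le> j" "j < n" for i j
    unfolding ord_stat_def using sorted_nth_mono[OF sorted_sort[of ?xs] that(1)] that len by simp
qed

theorem mainTheorem11:
  fixes M :: "'a measure" and N :: "'b measure"
    and X :: "nat \<Rightarrow> 'a \<Rightarrow> real" and Xs :: "nat \<Rightarrow> 'b \<Rightarrow> real"
    and alpha alphas :: "nat \<Rightarrow> real" and lam :: real and n :: nat
  assumes "prob_space M" and "prob_space N"
    and "n \<ge> 1" and "lam > 0"
    and "\<forall>i\<in>{1..n}. alpha i > 0" and "\<forall>i\<in>{1..n}. alphas i > 0"
    and "prob_space.indep_vars M (\<lambda>_. borel) X {1..n}"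
    and "prob_space.indep_vars N (\<lambda>_. borel) Xs {1..n}"
    and "\<forall>i\<in>{1..n}. \<forall>x. measure M {\<omega> \<in> space M. X i \<omega> \<le> x} = GE_cdf (alpha i) lam x"
    and "\<forall>i\<in>{1..n}. \<forall>x. measure N {\<omega> \<in> space N. Xs i \<omega> \<le> x} = GE_cdf (alphas i) lam x"
    and "\<forall>j\<in>{1..n}. (\<Sum>i=1..j. ord_stat alphas n i) \<ge> (\<Sum>i=1..j. ord_stat alpha n i)"
  shows "hr_le M (\<lambda>\<omega>. Min ((\<lambda>i. X i \<omega>) ` {1..n}))
               N (\<lambda>\<omega>. Min ((\<lambda>i. Xs i \<omega>) ` {1..n}))"
  unfolding hr_le_def
proof (intro allI impI)
  fix x :: real assume x: "x > 0"
  define u where "u = 1 - exp (-lam*x)"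
  have u: "0 < u" "u < 1" using x assms(4) by (auto simp: u_def)
  define t where "t = - ln u"
  have t: "t > 0" using u by (simp add: t_def)
  define C where "C = lam * exp (-lam*x) / (u * t)"
  have C: "C > 0" using u t assms(4) by (simp add: C_def)
  have HX: "hazard_rate M (\<lambda>\<omega>. Min ((\<lambda>i. X i \<omega>) ` {1..n})) x = C * (\<Sum>i<n. phi (t * ord_stat alpha n (Suc i)))"
  proof -
    have "hazard_rate M (\<lambda>\<omega>. Min ((\<lambda>i. X i \<omega>) ` {1..n})) x = (\<Sum>i=1..n. C * phi (t * alpha i))"
      using hazard_min[OF assms(1,3,4,5,7,9) x] unfolding C_def t_def u_def .
    also have "\<dots> = C * (\<Sum>i=1..n. phi (t * alpha i))" by (simp add: sum_distrib_left)
    also have "\<dots> = C * (\<Sum>i=1..n. phi (t * ord_stat alpha n i))"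
      using ord_stat_sum[of "\<lambda>a. phi (t * a)" alpha n] by simp
    also have "\<dots> = C * (\<Sum>i<n. phi (t * ord_stat alpha n (Suc i)))"
      using shift_sum2[of "\<lambda>i. phi (t * ord_stat alpha n i)" n] by simp
    finally show ?thesis .
  qed
  have HXs: "hazard_rate N (\<lambda>\<omega>. Min ((\<lambda>i. Xs i \<omega>) ` {1..n})) x = C * (\<Sum>i<n. phi (t * ord_stat alphas n (Suc i)))"
  proof -
    have "hazard_rate N (\<lambda>\<omega>. Min ((\<lambda>i. Xs i \<omega>) ` {1..n})) x = (\<Sum>i=1..n. C * phi (t * alphas i))"
      using hazard_min[OF assms(2,3,4,6,8,10) x] unfolding C_def t_def u_def .
    also have "\<dots> = C * (\<Sum>i=1..n. phi (t * alphas i))" by (simp add: sum_distrib_left)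
    also have "\<dots> = C * (\<Sum>i=1..n. phi (t * ord_stat alphas n i))"
      using ord_stat_sum[of "\<lambda>a. phi (t * a)" alphas n] by simp
    also have "\<dots> = C * (\<Sum>i<n. phi (t * ord_stat alphas n (Suc i)))"
      using shift_sum2[of "\<lambda>i. phi (t * ord_stat alphas n i)" n] by simp
    finally show ?thesis .
  qed
  have maj: "(\<Sum>i<n. phi (t * ord_stat alphas n (Suc i))) \<le> (\<Sum>i<n. phi (t * ord_stat alpha n (Suc i)))"
  proof (rule majorization[where f = "\<lambda>a. phi (t * a)" and f' = "\<lambda>a. dphi (t * a) * t"])
    show "((\<lambda>a. phi (t * a)) has_real_derivative dphi (t * y) * t) (at y)" if "y > 0" for y
      using DERIV_chain2[OF phi_deriv[of "t * y"] DERIV_cmult_Id[of t y]] that t by simp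
    show "dphi (t * y) * t \<le> dphi (t * z) * t" if "0 < y" "y \<le> z" for y z
      using dphi_mono[of "t * y" "t * z"] that t by (simp add: mult_right_mono)
    show "dphi (t * y) * t \<le> 0" if "y > 0" for y
      using dphi_nonpos[of "t * y"] that t by (simp add: mult_nonpos_nonneg)
    show "ord_stat alpha n (Suc i) > 0" if "i < n" for i using ord_stat_facts(1)[OF assms(5) that] .
    show "ord_stat alphas n (Suc i) > 0" if "i < n" for i using ord_stat_facts(1)[OF assms(6) that] .
    show "ord_stat alphas n (Suc i) \<le> ord_stat alphas n (Suc j)" if "i \<le> j" "j < n" for i j
      using ord_stat_facts(2)[OF assms(6) that] .
    show "(\<Sum>i<j. ord_stat alpha n (Suc i)) \<le> (\<Sum>i<j. ord_stat alphas n (Suc i))" if "j \<le> n" for j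
    proof (cases "j = 0")
      case True then show ?thesis by simp
    next
      case False
      then have "j \<in> {1..n}" using that by simp
      then show ?thesis using assms(11) by (simp add: shift_sum2)
    qed
  qed
  show "hazard_rate N (\<lambda>\<omega>. Min ((\<lambda>i. Xs i \<omega>) ` {1..n})) x \<le> hazard_rate M (\<lambda>\<omega>. Min ((\<lambda>i. X i \<omega>) ` {1..n})) x"
    unfolding HX HXs using maj C by (simp add: mult_left_mono)
qed


end
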